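(* Let $J\ge 2$ be an integer (the number of reflecting surfaces, indexed $1,\dots,J$), and let $N_p, N_a$ be positive integers and $P_t, P_a, M, \kappa_B, \kappa_U, \kappa_I, \sigma^2$ be positive reals with $N_p\kappa_I<1$, i.e. $N_p<\kappa_I^{-1}$. Set $C_a = P_a N_a \kappa_U^2$ and $C_t = P_t M \kappa_B^2$, and for $l\in\{1,\dots,J\}$ define $$\gamma(l)=\frac{C_aC_tN_a(N_p\kappa_I)^{2(J-1)}}{\sigma^2C_a(N_p\kappa_I)^{2(J-l)}+\sigma^2\big(C_t(N_p\kappa_I)^{2(l-1)}+\sigma^2\big)}.$$ Let $\tilde l=\frac{J+1}{2}+\frac{\log(C_a/C_t)}{2\log(N_p^2\kappa_I^2)}$. Then an optimal solution $l_1^\star$ of $\max_{l\in\{1,\dots,J\}}\gamma(l)$ is given as follows. (I) If $C_a<C_t$: $l_1^\star=\arg\max_{l\in\{\lfloor\tilde l\rfloor,\lceil\tilde l\rceil\}}\gamma(l)$ if $N_p<(C_a/C_t)^{\frac{1}{2(J-1)}}\kappa_I^{-1}$, and $l_1^\star=J$ if $(C_a/C_t)^{\frac{1}{2(J-1)}}\kappa_I^{-1}\le N_p<\kappa_I^{-1}$. (II) If $C_a=C_t$: $l_1^\star=\arg\max_{l\in\{\lfloor\frac{J+1}{2}\rfloor,\lceil\frac{J+1}{2}\rceil\}}\gamma(l)$. (III) If $C_a>C_t$: $l_1^\star=\arg\max_{l\in\{\lfloor\tilde l\rfloor,\lceil\tilde l\rceil\}}\gamma(l)$ if $N_p<(C_t/C_a)^{\frac{1}{2(J-1)}}\kappa_I^{-1}$,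 and $l_1^\star=1$ if $(C_t/C_a)^{\frac{1}{2(J-1)}}\kappa_I^{-1}\le N_p<\kappa_I^{-1}$.
   Context: Physical setting (for interpretation): an $M$-antenna base station with transmit power $P_t$ sends information to a single-antenna user over a cascaded line-of-sight path through $J$ intelligent reflecting surfaces (IRSs) numbered $1,\dots,J$ in order from the base station; IRS $l$ is active (with $N_a$ elements, per-element amplification power limit $P_a$) and the others are passive (with $N_p$ elements each). $\kappa_B,\kappa_I,\kappa_U$ are the amplitude path gains of the base station–IRS 1 link, each inter-IRS link, and the IRS $J$–user link; $\sigma^2$ is the noise power (both amplification noise per active element and receiver noise). With optimal beamforming, the user's received SNR as a function of the active IRS index $l$ is $\gamma(l)$ above. Standing assumption: $N_p\kappa_I<1$ (the cascaded passive gain decreases with each reflection). $\lfloor\cdot\rfloor,\lceil\cdot\rceil$ are floor and ceiling. *)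

theory Defs
  imports Complex_Main
begin

text \<open>Received SNR when IRS number l (1 <= l <= J) is the active one;
  Ca = Pa Na kU^2, Ct = Pt M kB^2, x = Np kI.\<close>
definition snr_gamma :: "nat \<Rightarrow> real \<Rightarrow> real \<Rightarrow> real \<Rightarrow> real \<Rightarrow> real \<Rightarrow> nat \<Rightarrow> real" where
  "snr_gamma J Na x Ca Ct \<sigma>2 l =
     (Ca * Ct * Na * x ^ (2 * (J - 1))) /
     (\<sigma>2 * Ca * x ^ (2 * (J - l)) + \<sigma>2 * (Ct * x ^ (2 * (l - 1)) + \<sigma>2))"

definition is_opt :: "(nat \<Rightarrow> real) \<Rightarrow> nat set \<Rightarrow> nat \<Rightarrow> bool" where
  "is_opt f S l \<longleftrightarrow> l \<in> S \<and> (\<forall>l'\<in>S. f l' \<le> f l)"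

end

theory Submission
  imports Defs
begin

lemma chain_up:
  fixes g :: "nat \<Rightarrow> real"
  assumes "\<And>l. a \<le> l \<Longrightarrow> l < b \<Longrightarrow> g l \<le> g (Suc l)" and "a \<le> b"
  shows "g a \<le> g b"
  using assms(2,1)
proof (induction b rule: dec_induct)
  case base then show ?case by simp
next
  case (step n) then show ?case by (meson order_trans less_Suc_eq)
qed

lemma chain_down:
  fixes g :: "nat \<Rightarrow> real"
  assumes "\<And>l. a \<le> l \<Longrightarrow> l < b \<Longrightarrow> g (Suc l) \<le> g l" and "a \<le> b"
  shows "g b \<le> g a"
  using assms(2,1)
proof (induction b rule: dec_induct)
  case base then show ?case by simp
next
  case (step n) then show ?case by (meson order_trans less_Suc_eq)
qed

lemma discrete_opt:
  fixes g :: "nat \<Rightarrow> real" and t :: real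
  assumes up: "\<And>l. 1 \<le> l \<Longrightarrow> l < J \<Longrightarrow> real l + 1/2 \<le> t \<Longrightarrow> g l \<le> g (Suc l)"
    and down: "\<And>l. 1 \<le> l \<Longrightarrow> l < J \<Longrightarrow> t \<le> real l + 1/2 \<Longrightarrow> g (Suc l) \<le> g l"
    and t1: "1 \<le> t" and tJ: "t \<le> real J"
    and opt: "l0 \<in> {nat \<lfloor>t\<rfloor>, nat \<lceil>t\<rceil>}" "\<forall>l'\<in>{nat \<lfloor>t\<rfloor>, nat \<lceil>t\<rceil>}. g l' \<le> g l0"
  shows "l0 \<in> {1..J} \<and> (\<forall>l\<in>{1..J}. g l \<le> g l0)"
proof -
  define a where "a = nat \<lfloor>t\<rfloor>"
  define b where "b = nat \<lceil>t\<rceil>"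
  have f1: "1 \<le> \<lfloor>t\<rfloor>" using t1 by linarith
  have f2: "\<lfloor>t\<rfloor> \<le> int J" using tJ by linarith
  have c1: "1 \<le> \<lceil>t\<rceil>" using t1 by linarith
  have c2: "\<lceil>t\<rceil> \<le> int J" using tJ by linarith
  have ra: "real a = of_int \<lfloor>t\<rfloor>" unfolding a_def using f1 by simp
  have rb: "real b = of_int \<lceil>t\<rceil>" unfolding b_def using c1 by simp
  have a1: "1 \<le> a" "a \<le> J" using f1 f2 unfolding a_def by linarith+
  have b1: "1 \<le> b" "b \<le> J" using c1 c2 unfolding b_def by linarith+
  have at: "real a \<le> t" using ra by linarith
  have bt: "t \<le> real b" using rb by linarith
  have ab: "b \<le> a + 1" using ceiling_diff_floor_le_1[of t] f1 c1 unfolding a_def b_def by linarith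
  have l0: "l0 \<in> {1..J}" using opt(1) a1 b1 unfolding a_def[symmetric] b_def[symmetric] by auto
  have ga: "g a \<le> g l0" and gb: "g b \<le> g l0" using opt(2) unfolding a_def[symmetric] b_def[symmetric] by auto
  have "g l \<le> g l0" if l: "l \<in> {1..J}" for l
  proof (cases "l \<le> a")
    case True
    have "g l \<le> g a"
      by (rule chain_up[OF _ True]) (rule up, use l at a1 in auto)
    then show ?thesis using ga by linarith
  next
    case False
    then have "b \<le> l" using ab by linarith
    have "g l \<le> g b"
      by (rule chain_down[OF _ \<open>b \<le> l\<close>]) (rule down, use l bt b1 in auto)
    then show ?thesis using gb by linarith
  qed
  then show ?thesis using l0 by blast
qed


lemma endpoint_J:
  fixes g :: "nat \<Rightarrow> real" and t :: real
  assumes up: "\<And>l. 1 \<le> l \<Longrightarrow> l < J \<Longrightarrow> real l + 1/2 \<le> t \<Longrightarrow> g l \<le> g (Suc l)"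
    and tJ: "real J \<le> t" and J1: "1 \<le> J"
  shows "is_opt g {1..J} J"
  unfolding is_opt_def
proof (intro conjI ballI)
  show "J \<in> {1..J}" using J1 by simp
  fix l assume l: "l \<in> {1..J}"
  show "g l \<le> g J" by (rule chain_up) (rule up, use l tJ in auto)
qed

lemma endpoint_1:
  fixes g :: "nat \<Rightarrow> real" and t :: real
  assumes down: "\<And>l. 1 \<le> l \<Longrightarrow> l < J \<Longrightarrow> t \<le> real l + 1/2 \<Longrightarrow> g (Suc l) \<le> g l"
    and t1: "t \<le> 1" and J1: "1 \<le> J"
  shows "is_opt g {1..J} 1"
  unfolding is_opt_def
proof (intro conjI ballI)
  show "1 \<in> {1..J}" using J1 by simp
  fix l assume l: "l \<in> {1..J}"
  show "g l \<le> g 1" by (rule chain_down) (rule down, use l t1 in auto)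
qed

theorem proposition1:
  fixes J Np Na :: nat and Pt Pa M \<kappa>B \<kappa>U \<kappa>I \<sigma>2 :: real
  assumes hJ: "J \<ge> 2" and hNp: "Np > 0" and hNa: "Na > 0"
    and pos: "Pt > 0" "Pa > 0" "M > 0" "\<kappa>B > 0" "\<kappa>U > 0" "\<kappa>I > 0" "\<sigma>2 > 0"
    and hlt: "real Np * \<kappa>I < 1"
  defines "Ca \<equiv> Pa * real Na * \<kappa>U ^ 2"
    and "Ct \<equiv> Pt * M * \<kappa>B ^ 2"
  defines "\<gamma> \<equiv> snr_gamma J (real Na) (real Np * \<kappa>I) Ca Ct \<sigma>2"
    and "lt \<equiv> (real J + 1) / 2 + ln (Ca / Ct) / (2 * ln ((real Np)\<^sup>2 * \<kappa>I\<^sup>2))"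
  shows
    "(Ca < Ct \<longrightarrow>
        (real Np < (Ca / Ct) powr (1 / (2 * (real J - 1))) / \<kappa>I \<longrightarrow>
           (\<forall>l. is_opt \<gamma> {nat \<lfloor>lt\<rfloor>, nat \<lceil>lt\<rceil>} l \<longrightarrow> is_opt \<gamma> {1..J} l)) \<and>
        ((Ca / Ct) powr (1 / (2 * (real J - 1))) / \<kappa>I \<le> real Np \<longrightarrow>
           is_opt \<gamma> {1..J} J)) \<and>
     (Ca = Ct \<longrightarrow>
        (\<forall>l. is_opt \<gamma> {nat \<lfloor>(real J + 1) / 2\<rfloor>, nat \<lceil>(real J + 1) / 2\<rceil>} l \<longrightarrow>
             is_opt \<gamma> {1..J} l)) \<and>
     (Ca > Ct \<longrightarrow>
        (real Np < (Ct / Ca) powr (1 / (2 * (real J - 1))) / \<kappa>I \<longrightarrow>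
           (\<forall>l. is_opt \<gamma> {nat \<lfloor>lt\<rfloor>, nat \<lceil>lt\<rceil>} l \<longrightarrow> is_opt \<gamma> {1..J} l)) \<and>
        ((Ct / Ca) powr (1 / (2 * (real J - 1))) / \<kappa>I \<le> real Np \<longrightarrow>
           is_opt \<gamma> {1..J} 1))"
proof -
  define x where "x = real Np * \<kappa>I"
  define q where "q = x ^ 2"
  define Q where "Q = ln q"
  define L where "L = ln (Ca / Ct)"
  have x0: "0 < x" and x1: "x < 1" using hNp pos hlt unfolding x_def by auto
  have q0: "0 < q" and q1: "q < 1" unfolding q_def using x0 x1
    by (auto simp: power_less_one_iff)
  have Q0: "Q < 0" unfolding Q_def using q0 q1 by simp
  have Qx: "Q = 2 * ln x" unfolding Q_def q_def using x0 by (simp add: ln_realpow)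
  have Ca0: "Ca > 0" unfolding Ca_def using pos hNa by simp
  have Ct0: "Ct > 0" unfolding Ct_def using pos by simp
  have L: "L = ln Ca - ln Ct" unfolding L_def using Ca0 Ct0 by (simp add: ln_div)
  have lt: "lt = (real J + 1) / 2 + L / (2 * Q)"
    unfolding lt_def L_def Q_def q_def x_def by (simp add: power_mult_distrib)
  define K where "K = Ca * Ct * real Na * x ^ (2 * (J - 1))"
  define D where "D l = \<sigma>2 * Ca * q ^ (J - l) + \<sigma>2 * (Ct * q ^ (l - 1) + \<sigma>2)" for l
  have K0: "K > 0" unfolding K_def using Ca0 Ct0 hNa x0 by simp
  have D0: "D l > 0" for l unfolding D_def using pos Ca0 Ct0 q0
    by (intro add_pos_pos mult_pos_pos) auto
  have gam: "\<gamma> l = K / D l" for l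
    unfolding \<gamma>_def snr_gamma_def K_def D_def q_def x_def by (simp add: power_mult)
  have gle: "\<gamma> a \<le> \<gamma> b \<longleftrightarrow> D b \<le> D a" for a b
    unfolding gam using K0 D0[of a] D0[of b] by (simp add: divide_le_eq frac_le_eq field_simps)
  have Ddiff: "D l - D (Suc l) = \<sigma>2 * (1 - q) * (Ct * q ^ (l - 1) - Ca * q ^ (J - Suc l))"
    if "1 \<le> l" "l < J" for l
  proof -
    have e1: "J - l = Suc (J - Suc l)" using that by simp
    have e2: "Suc l - 1 = Suc (l - 1)" using that by simp
    show ?thesis unfolding D_def e1 e2 by (simp add: algebra_simps)
  qed
  have cmp: "Ca * q ^ a \<le> Ct * q ^ b \<longleftrightarrow> L \<le> (real b - real a) * Q" for a b
  proof -
    have "Ca * q ^ a \<le> Ct * q ^ b \<longleftrightarrow> ln (Ca * q ^ a) \<le> ln (Ct * q ^ b)"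
      using Ca0 Ct0 q0 by simp
    also have "\<dots> \<longleftrightarrow> ln Ca + real a * Q \<le> ln Ct + real b * Q"
      using Ca0 Ct0 q0 by (simp add: ln_mult ln_realpow Q_def)
    finally show ?thesis unfolding L by (simp add: algebra_simps)
  qed
  have cmp2: "Ct * q ^ b \<le> Ca * q ^ a \<longleftrightarrow> (real b - real a) * Q \<le> L" for a b
  proof -
    have "Ct * q ^ b \<le> Ca * q ^ a \<longleftrightarrow> ln (Ct * q ^ b) \<le> ln (Ca * q ^ a)"
      using Ca0 Ct0 q0 by simp
    also have "\<dots> \<longleftrightarrow> ln Ct + real b * Q \<le> ln Ca + real a * Q"
      using Ca0 Ct0 q0 by (simp add: ln_mult ln_realpow Q_def)
    finally show ?thesis unfolding L by (simp add: algebra_simps)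
  qed
  have sq: "\<sigma>2 * (1 - q) > 0" using pos q1 by simp
  have hp: "0 \<le> c * y \<longleftrightarrow> 0 \<le> y" if "c > 0" for c y :: real using that by (simp add: zero_le_mult_iff)
  have hn: "c * y \<le> 0 \<longleftrightarrow> y \<le> 0" if "c > 0" for c y :: real using that by (simp add: mult_le_0_iff)
  have key_up: "real l + 1/2 \<le> lt \<longleftrightarrow> \<gamma> l \<le> \<gamma> (Suc l)" if "1 \<le> l" "l < J" for l
  proof -
    have "\<gamma> l \<le> \<gamma> (Suc l) \<longleftrightarrow> 0 \<le> D l - D (Suc l)" using gle by simp
    also have "\<dots> \<longleftrightarrow> Ca * q ^ (J - Suc l) \<le> Ct * q ^ (l - 1)"
      unfolding Ddiff[OF that] hp[OF sq] by simp
    also have "\<dots> \<longleftrightarrow> L \<le> (real (l - 1) - real (J - Suc l)) * Q" by (rule cmp)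
    also have "\<dots> \<longleftrightarrow> L \<le> (2 * real l - real J) * Q" using that by (simp add: of_nat_diff)
    also have "\<dots> \<longleftrightarrow> real l + 1/2 \<le> lt" unfolding lt using Q0
      by (simp add: field_simps) linarith
    finally show ?thesis by simp
  qed
  have key_down: "lt \<le> real l + 1/2 \<longleftrightarrow> \<gamma> (Suc l) \<le> \<gamma> l" if "1 \<le> l" "l < J" for l
  proof -
    have "\<gamma> (Suc l) \<le> \<gamma> l \<longleftrightarrow> D l - D (Suc l) \<le> 0" using gle by simp
    also have "\<dots> \<longleftrightarrow> Ct * q ^ (l - 1) \<le> Ca * q ^ (J - Suc l)"
      unfolding Ddiff[OF that] hn[OF sq] by simp
    also have "\<dots> \<longleftrightarrow> (real (l - 1) - real (J - Suc l)) * Q \<le> L" by (rule cmp2)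
    also have "\<dots> \<longleftrightarrow> (2 * real l - real J) * Q \<le> L" using that by (simp add: of_nat_diff)
    also have "\<dots> \<longleftrightarrow> lt \<le> real l + 1/2" unfolding lt using Q0
      by (simp add: field_simps) linarith
    finally show ?thesis by simp
  qed
  have J1: "1 \<le> J" using hJ by simp
  have up: "\<gamma> l \<le> \<gamma> (Suc l)" if "1 \<le> l" "l < J" "real l + 1/2 \<le> lt" for l
    using key_up that by blast
  have down: "\<gamma> (Suc l) \<le> \<gamma> l" if "1 \<le> l" "l < J" "lt \<le> real l + 1/2" for l
    using key_down that by blast
  have mid: "\<forall>l. is_opt \<gamma> {nat \<lfloor>lt\<rfloor>, nat \<lceil>lt\<rceil>} l \<longrightarrow> is_opt \<gamma> {1..J} l"
    if "1 \<le> lt" "lt \<le> real J"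
    using discrete_opt[where g=\<gamma> and t=lt and J=J, OF up down that] unfolding is_opt_def by blast
  define e where "e = 1 / (2 * (real J - 1))"
  have e0: "e > 0" unfolding e_def using hJ by simp
  have powr_lt: "real Np < (r powr e) / \<kappa>I \<longleftrightarrow> (real J - 1) * Q < ln r" if "r > 0" for r
  proof -
    have "real Np < (r powr e) / \<kappa>I \<longleftrightarrow> x < r powr e" unfolding x_def using pos
      by (simp add: field_simps)
    also have "\<dots> \<longleftrightarrow> ln x < ln (r powr e)"
      using x0 that by (intro ln_less_cancel_iff[symmetric]) auto
    also have "\<dots> \<longleftrightarrow> ln x < e * ln r" using that by (simp add: ln_powr)
    also have "\<dots> \<longleftrightarrow> (real J - 1) * Q < ln r" unfolding Qx e_def using hJ
      by (simp add: field_simps)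
    finally show ?thesis .
  qed
  have powr_ge: "(r powr e) / \<kappa>I \<le> real Np \<longleftrightarrow> ln r \<le> (real J - 1) * Q" if "r > 0" for r
    using powr_lt[OF that] by linarith
  have LCt: "ln (Ct / Ca) = - L" unfolding L using Ca0 Ct0 by (simp add: ln_div)
  show ?thesis unfolding e_def[symmetric]
  proof (intro conjI impI)
    assume c: "Ca < Ct"
    then have L0: "L < 0" unfolding L using Ca0 by simp
    have lt1: "1 \<le> lt" unfolding lt using L0 Q0 hJ by (simp add: divide_neg_neg add_increasing2 less_imp_le)
    {
      assume "real Np < (Ca / Ct) powr e / \<kappa>I"
      then have "(real J - 1) * Q < L" using powr_lt[of "Ca/Ct"] Ca0 Ct0 unfolding L_def by simp
      then have "lt \<le> real J" unfolding lt using Q0 by (simp add: field_simps)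
      then show "\<forall>l. is_opt \<gamma> {nat \<lfloor>lt\<rfloor>, nat \<lceil>lt\<rceil>} l \<longrightarrow> is_opt \<gamma> {1..J} l"
        using mid lt1 by blast
    }
    {
      assume "(Ca / Ct) powr e / \<kappa>I \<le> real Np"
      then have "L \<le> (real J - 1) * Q" using powr_ge[of "Ca/Ct"] Ca0 Ct0 unfolding L_def by simp
      then have "real J \<le> lt" unfolding lt using Q0 by (simp add: field_simps)
      then show "is_opt \<gamma> {1..J} J" using endpoint_J[where g=\<gamma> and t=lt and J=J, OF up] J1 by blast
    }
  next
    assume "Ca = Ct"
    then have "L = 0" unfolding L by simp
    then have "lt = (real J + 1) / 2" unfolding lt by simp
    moreover have "1 \<le> (real J + 1) / 2" "(real J + 1) / 2 \<le> real J" using hJ by auto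
    ultimately show "\<forall>l. is_opt \<gamma> {nat \<lfloor>(real J + 1) / 2\<rfloor>, nat \<lceil>(real J + 1) / 2\<rceil>} l \<longrightarrow>
             is_opt \<gamma> {1..J} l" using mid by (metis (no_types))
  next
    assume c: "Ct < Ca"
    then have L0: "L > 0" unfolding L using Ct0 by simp
    have "L / (2 * Q) \<le> 0" using L0 Q0 by (simp add: divide_pos_neg less_imp_le)
    moreover have "real J \<ge> 2" using hJ by simp
    then have "\<And>u. u \<le> 0 \<Longrightarrow> (real J + 1) / 2 + u \<le> real J" by (simp add: field_simps)
    ultimately have ltJ: "lt \<le> real J" unfolding lt by blast
    {
      assume "real Np < (Ct / Ca) powr e / \<kappa>I"
      then have "(real J - 1) * Q < - L" using powr_lt[of "Ct/Ca"] Ca0 Ct0 LCt by simp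
      then have "1 \<le> lt" unfolding lt using Q0 by (simp add: field_simps)
      then show "\<forall>l. is_opt \<gamma> {nat \<lfloor>lt\<rfloor>, nat \<lceil>lt\<rceil>} l \<longrightarrow> is_opt \<gamma> {1..J} l"
        using mid ltJ by blast
    }
    {
      assume "(Ct / Ca) powr e / \<kappa>I \<le> real Np"
      then have "- L \<le> (real J - 1) * Q" using powr_ge[of "Ct/Ca"] Ca0 Ct0 LCt by simp
      then have "lt \<le> 1" unfolding lt using Q0 by (simp add: field_simps)
      then show "is_opt \<gamma> {1..J} 1" using endpoint_1[where g=\<gamma> and t=lt and J=J, OF down] J1 by blast
    }
  qed
qed
end
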